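(* Let $(\beta,\gamma)$ be antiferromagnetic and $\lambda,\lambda_1,\lambda_2>0$. Let $G=(V,E)$ be a graph and $S\subseteq V$. For $i\in\{1,2\}$ let $\boldsymbol{\lambda}_i$ be the field vector on $V$ in which every $v\in S$ has field $\lambda_i$ and every $v\in V\setminus S$ has field $\lambda$, and let $\mu_i=\mu_{G;\beta,\gamma,\boldsymbol{\lambda}_i}$. Then for every $v\in V$, $$\big|\mathbf{E}_{\sigma\sim\mu_2}[\sigma(v)]-\mathbf{E}_{\sigma\sim\mu_1}[\sigma(v)]\big|\leq 2|S|\,\Big|\frac{\lambda_2}{\lambda_1}-1\Big|.$$
   Context: A pair $(\beta,\gamma)$ with $\beta,\gamma\geq0$ is antiferromagnetic if $\beta\gamma\in[0,1)$ and at least one is nonzero. For a graph $G=(V,E)$ and a field vector $\boldsymbol{\lambda}=(\lambda_v)_{v\in V}$ of positive reals, $\mu_{G;\beta,\gamma,\boldsymbol{\lambda}}(\sigma)=w(\sigma)/Z$ for $\sigma:V\to\{0,1\}$, where $w(\sigma)=\beta^{m_0(\sigma)}\gamma^{m_1(\sigma)}\prod_{v:\sigma(v)=1}\lambda_v$, $m_0,m_1$ are the numbers of edges with both endpoints spin $0$, resp. spin $1$ (convention $0^0=1$), and $Z=\sum_\sigma w(\sigma)$. *)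

theory Defs
  imports "HOL-Analysis.Analysis"
begin

definition graph :: "'a set \<Rightarrow> 'a set set \<Rightarrow> bool" where
  "graph V E \<longleftrightarrow> finite V \<and> (\<forall>e\<in>E. e \<subseteq> V \<and> card e = 2)"

definition antiferro :: "real \<Rightarrow> real \<Rightarrow> bool" where
  "antiferro \<beta> \<gamma> \<longleftrightarrow> \<beta> \<ge> 0 \<and> \<gamma> \<ge> 0 \<and> \<beta> * \<gamma> < 1 \<and> (\<beta> \<noteq> 0 \<or> \<gamma> \<noteq> 0)"

definition configs :: "'a set \<Rightarrow> ('a \<Rightarrow> nat) set" where
  "configs V = PiE V (\<lambda>_. {0, 1})"

definition mono_edges :: "'a set set \<Rightarrow> ('a \<Rightarrow> nat) \<Rightarrow> nat \<Rightarrow> nat" where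
  "mono_edges E \<sigma> s = card {e\<in>E. \<forall>u\<in>e. \<sigma> u = s}"

text \<open>Weight w(sigma); powers are natural-number powers, so 0^0 = 1.\<close>
definition spin_weight ::
  "'a set \<Rightarrow> 'a set set \<Rightarrow> real \<Rightarrow> real \<Rightarrow> ('a \<Rightarrow> real) \<Rightarrow> ('a \<Rightarrow> nat) \<Rightarrow> real" where
  "spin_weight V E \<beta> \<gamma> lam \<sigma> =
     \<beta> ^ mono_edges E \<sigma> 0 * \<gamma> ^ mono_edges E \<sigma> 1 * (\<Prod>v\<in>{v\<in>V. \<sigma> v = 1}. lam v)"

definition partition_fn :: "'a set \<Rightarrow> 'a set set \<Rightarrow> real \<Rightarrow> real \<Rightarrow> ('a \<Rightarrow> real) \<Rightarrow> real" where
  "partition_fn V E \<beta> \<gamma> lam = (\<Sum>\<sigma>\<in>configs V. spin_weight V E \<beta> \<gamma> lam \<sigma>)"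

definition gibbs :: "'a set \<Rightarrow> 'a set set \<Rightarrow> real \<Rightarrow> real \<Rightarrow> ('a \<Rightarrow> real) \<Rightarrow> ('a \<Rightarrow> nat) \<Rightarrow> real" where
  "gibbs V E \<beta> \<gamma> lam \<sigma> = spin_weight V E \<beta> \<gamma> lam \<sigma> / partition_fn V E \<beta> \<gamma> lam"

definition spin_expect :: "'a set \<Rightarrow> 'a set set \<Rightarrow> real \<Rightarrow> real \<Rightarrow> ('a \<Rightarrow> real) \<Rightarrow> 'a \<Rightarrow> real" where
  "spin_expect V E \<beta> \<gamma> lam v = (\<Sum>\<sigma>\<in>configs V. gibbs V E \<beta> \<gamma> lam \<sigma> * real (\<sigma> v))"

end

theory Submission
  imports Defs
begin

lemma abstract_bound:
  fixes C :: "'c set" and a b f :: "'c \<Rightarrow> real" and q :: real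
  assumes fin: "finite C" and a0: "\<And>s. s \<in> C \<Longrightarrow> a s \<ge> 0"
    and b0: "\<And>s. s \<in> C \<Longrightarrow> b s \<ge> 0"
    and Za: "sum a C > 0" and Zb: "sum b C > 0"
    and f01: "\<And>s. s \<in> C \<Longrightarrow> 0 \<le> f s \<and> f s \<le> 1"
    and q1: "q \<le> 1"
    and cond: "\<And>s t. s \<in> C \<Longrightarrow> t \<in> C \<Longrightarrow> q * a s * b t \<le> b s * a t"
  shows "(\<Sum>s\<in>C. a s * f s) / sum a C - (\<Sum>s\<in>C. b s * f s) / sum b C \<le> 1 - q"
proof -
  have pt: "q * a s / sum a C \<le> b s / sum b C" if "s \<in> C" for s
  proof -
    have "q * a s * sum b C = (\<Sum>t\<in>C. q * a s * b t)" by (simp add: sum_distrib_left)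
    also have "\<dots> \<le> (\<Sum>t\<in>C. b s * a t)" by (rule sum_mono) (use cond that in auto)
    also have "\<dots> = b s * sum a C" by (simp add: sum_distrib_left)
    finally show ?thesis using Za Zb by (simp add: field_simps)
  qed
  define X where "X = (\<Sum>s\<in>C. a s * f s) / sum a C"
  have X1: "X \<le> 1"
  proof -
    have "(\<Sum>s\<in>C. a s * f s) \<le> sum a C"
      by (rule sum_mono) (use a0 f01 in \<open>auto intro: mult_left_le\<close>)
    thus ?thesis unfolding X_def using Za by simp
  qed
  have X0: "X \<ge> 0" unfolding X_def using Za a0 f01 by (auto intro!: divide_nonneg_pos sum_nonneg)
  have "q * X = (\<Sum>s\<in>C. (q * a s / sum a C) * f s)"
    unfolding X_def by (simp add: sum_distrib_left sum_divide_distrib mult_ac)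
  also have "\<dots> \<le> (\<Sum>s\<in>C. (b s / sum b C) * f s)"
  proof (rule sum_mono)
    fix s assume s: "s \<in> C"
    have "0 \<le> f s" using f01[OF s] by simp
    from mult_right_mono[OF pt[OF s] this]
    show "(q * a s / sum a C) * f s \<le> (b s / sum b C) * f s" .
  qed
  also have "\<dots> = (\<Sum>s\<in>C. b s * f s) / sum b C"
    by (simp add: sum_divide_distrib)
  finally have "q * X \<le> (\<Sum>s\<in>C. b s * f s) / sum b C" .
  moreover have "X - q * X \<le> 1 - q"
  proof -
    have "(1 - q) * X \<le> (1 - q) * 1" using X1 q1 by (intro mult_left_mono) auto
    thus ?thesis by (simp add: algebra_simps)
  qed
  ultimately show ?thesis unfolding X_def by linarith
qed

lemma bern_bound:
  fixes r :: real assumes "r > 0"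
  shows "1 - (min r (1/r)) ^ n \<le> real n * \<bar>r - 1\<bar>"
proof (cases "r \<le> 1")
  case True
  have "1 \<le> 1/r" using True assms by (simp add: le_divide_eq)
  hence m: "min r (1/r) = r" using True by (intro min_absorb1) linarith
  have "1 + real n * (r - 1) \<le> (1 + (r - 1)) ^ n"
    by (rule Bernoulli_inequality) (use assms in simp)
  thus ?thesis using m True by (simp add: abs_if algebra_simps)
next
  case False
  have "1/r < 1" using False assms by (simp add: divide_less_eq)
  hence m: "min r (1/r) = 1/r" using False by (intro min_absorb2) linarith
  have "1 + real n * (1/r - 1) \<le> (1 + (1/r - 1)) ^ n"
    by (rule Bernoulli_inequality) (use assms in simp)
  hence "1 - (1/r) ^ n \<le> real n * (1 - 1/r)" by (simp add: algebra_simps)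
  also have "\<dots> \<le> real n * (r - 1)"
  proof (rule mult_left_mono)
    have "1 - 1/r = (r - 1) / r" using assms by (simp add: field_simps)
    also have "\<dots> \<le> r - 1" using False by (simp add: divide_le_eq)
    finally show "1 - 1/r \<le> r - 1" .
  qed simp
  finally show ?thesis using m False by simp
qed


lemma h_bound:
  fixes r :: real assumes r: "r > 0" and k1: "k1 \<le> n" and k2: "k2 \<le> n"
  shows "(min r (1/r)) ^ n * r ^ k2 \<le> r ^ k1"
proof (cases "r \<le> 1")
  case True
  have "1 \<le> 1/r" using True r by (simp add: le_divide_eq)
  hence m: "min r (1/r) = r" using True by (intro min_absorb1) linarith
  have "r ^ (n + k2) \<le> r ^ k1" by (rule power_decreasing) (use k1 True r in auto)
  thus ?thesis using m by (simp add: power_add)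
next
  case False
  have "1/r < 1" using False r by (simp add: divide_less_eq)
  hence m: "min r (1/r) = 1/r" using False by (intro min_absorb2) linarith
  have "r ^ k2 \<le> r ^ (k1 + n)" by (rule power_increasing) (use k2 False in auto)
  hence "r ^ k2 / r ^ n \<le> r ^ k1" using r by (simp add: power_add divide_le_eq)
  thus ?thesis using m by (simp add: power_divide)
qed

lemma weight_nonneg:
  assumes "antiferro \<beta> \<gamma>" and "\<And>u. L u > 0"
  shows "spin_weight V E \<beta> \<gamma> L \<sigma> \<ge> 0"
  using assms unfolding spin_weight_def antiferro_def
  by (intro mult_nonneg_nonneg prod_nonneg zero_le_power) (auto intro: less_imp_le)

lemma Z_pos:
  assumes af: "antiferro \<beta> \<gamma>" and L: "\<And>u. L u > 0" and g: "graph V E"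
  shows "sum (spin_weight V E \<beta> \<gamma> L) (configs V) > 0"
proof -
  have finV: "finite V" using g by (simp add: graph_def)
  have finC: "finite (configs V)" unfolding configs_def using finV by (simp add: finite_PiE)
  have ne: "\<exists>u\<in>e. u \<in> V" if "e \<in> E" for e
  proof -
    have "e \<subseteq> V" "card e = 2" using g that by (auto simp: graph_def)
    thus ?thesis by (metis card.empty ex_in_conv subsetD zero_neq_numeral)
  qed
  obtain \<sigma> where s: "\<sigma> \<in> configs V" and p: "spin_weight V E \<beta> \<gamma> L \<sigma> > 0"
  proof (cases "\<beta> > 0")
    case True
    define \<sigma> where "\<sigma> = (\<lambda>u. if u \<in> V then (0::nat) else undefined)"
    have "\<sigma> \<in> configs V" unfolding configs_def \<sigma>_def by (auto simp: PiE_iff extensional_def)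
    moreover have eqE: "{e\<in>E. \<forall>u\<in>e. \<sigma> u = 1} = {}" using ne unfolding \<sigma>_def by fastforce
    moreover have eqV: "{v\<in>V. \<sigma> v = 1} = {}" unfolding \<sigma>_def by auto
    moreover have "spin_weight V E \<beta> \<gamma> L \<sigma> > 0"
      unfolding spin_weight_def mono_edges_def eqE eqV using True by simp
    ultimately show ?thesis by (intro that[of \<sigma>])
  next
    case False
    hence b0: "\<beta> = 0" and gp: "\<gamma> > 0" using af by (auto simp: antiferro_def)
    define \<sigma> where "\<sigma> = (\<lambda>u. if u \<in> V then (1::nat) else undefined)"
    have "\<sigma> \<in> configs V" unfolding configs_def \<sigma>_def by (auto simp: PiE_iff extensional_def)
    moreover have eqE: "{e\<in>E. \<forall>u\<in>e. \<sigma> u = 0} = {}" using ne unfolding \<sigma>_def by fastforce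
    moreover have pp: "(\<Prod>v\<in>{v\<in>V. \<sigma> v = 1}. L v) > 0" using L by (intro prod_pos) auto
    moreover have "spin_weight V E \<beta> \<gamma> L \<sigma> > 0"
      unfolding spin_weight_def mono_edges_def eqE using gp pp by simp
    ultimately show ?thesis by (intro that[of \<sigma>])
  qed
  show ?thesis
  proof (rule sum_pos2[of "configs V" \<sigma> "spin_weight V E \<beta> \<gamma> L"])
    show "\<And>i. i \<in> configs V \<Longrightarrow> 0 \<le> spin_weight V E \<beta> \<gamma> L i"
      using weight_nonneg[of \<beta> \<gamma> L, OF af L] by blast
  qed (use finC s p in auto)
qed

lemma expect_eq:
  "spin_expect V E \<beta> \<gamma> L v =
     (\<Sum>\<sigma>\<in>configs V. spin_weight V E \<beta> \<gamma> L \<sigma> * real (\<sigma> v)) / sum (spin_weight V E \<beta> \<gamma> L) (configs V)"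
  unfolding spin_expect_def gibbs_def partition_fn_def
  by (simp add: sum_divide_distrib)

theorem lemma5p2:
  fixes V :: "'a set" and E :: "'a set set" and S :: "'a set"
    and \<beta> \<gamma> lam lam1 lam2 :: real and v :: 'a
  assumes "antiferro \<beta> \<gamma>"
    and "lam > 0" and "lam1 > 0" and "lam2 > 0"
    and "graph V E" and "S \<subseteq> V" and "v \<in> V"
  shows "\<bar>spin_expect V E \<beta> \<gamma> (\<lambda>u. if u \<in> S then lam2 else lam) v
          - spin_expect V E \<beta> \<gamma> (\<lambda>u. if u \<in> S then lam1 else lam) v\<bar>
         \<le> 2 * real (card S) * \<bar>lam2 / lam1 - 1\<bar>"
proof -
  note af = assms(1) and g = assms(5)
  define r where "r = lam2 / lam1"
  define n where "n = card S"
  define q where "q = (min r (1/r)) ^ n"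
  define L1 where "L1 = (\<lambda>u. if u \<in> S then lam1 else lam)"
  define L2 where "L2 = (\<lambda>u. if u \<in> S then lam2 else lam)"
  define C where "C = configs V"
  define w1 where "w1 = spin_weight V E \<beta> \<gamma> L1"
  define w2 where "w2 = spin_weight V E \<beta> \<gamma> L2"
  define h where "h = (\<lambda>\<sigma>::'a\<Rightarrow>nat. r ^ card ({u\<in>V. \<sigma> u = 1} \<inter> S))"
  define f where "f = (\<lambda>\<sigma>::'a\<Rightarrow>nat. real (\<sigma> v))"
  have r0: "r > 0" unfolding r_def using assms by simp
  have finV: "finite V" using g by (simp add: graph_def)
  have finC: "finite C" unfolding C_def configs_def using finV by (simp add: finite_PiE)
  have finS: "finite S" using finV assms(6) by (rule finite_subset[rotated])
  have L1p: "\<And>u. L1 u > 0" and L2p: "\<And>u. L2 u > 0" unfolding L1_def L2_def using assms by auto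
  have w2eq: "w2 \<sigma> = w1 \<sigma> * h \<sigma>" for \<sigma>
  proof -
    define A where "A = {u\<in>V. \<sigma> u = 1}"
    have finA: "finite A" unfolding A_def using finV by simp
    have "(\<Prod>u\<in>A. L2 u) = (\<Prod>u\<in>A. L1 u * (if u \<in> S then r else 1))"
      by (rule prod.cong) (use assms(3) in \<open>auto simp: L1_def L2_def r_def\<close>)
    also have "\<dots> = (\<Prod>u\<in>A. L1 u) * (\<Prod>u\<in>A. if u \<in> S then r else 1)"
      by (simp add: prod.distrib)
    also have "(\<Prod>u\<in>A. if u \<in> S then r else 1) = (\<Prod>u\<in>A \<inter> S. r)"
      by (rule prod.inter_restrict[OF finA, symmetric])
    also have "\<dots> = h \<sigma>" unfolding h_def A_def by simp
    finally show ?thesis unfolding w1_def w2_def spin_weight_def A_def by (simp add: mult_ac)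
  qed
  have w1n: "\<And>\<sigma>. w1 \<sigma> \<ge> 0" unfolding w1_def by (rule weight_nonneg[OF af L1p])
  have w2n: "\<And>\<sigma>. w2 \<sigma> \<ge> 0" unfolding w2_def by (rule weight_nonneg[OF af L2p])
  have hc: "q * h \<tau> \<le> h \<sigma>" for \<sigma> \<tau>
    unfolding q_def h_def n_def
    by (rule h_bound[OF r0]) (use finS in \<open>auto intro: card_mono\<close>)
  have Z1: "sum w1 C > 0" unfolding w1_def C_def by (rule Z_pos[OF af L1p g])
  have Z2: "sum w2 C > 0" unfolding w2_def C_def by (rule Z_pos[OF af L2p g])
  have f01: "0 \<le> f \<sigma> \<and> f \<sigma> \<le> 1" if "\<sigma> \<in> C" for \<sigma>
  proof -
    have "\<sigma> v \<in> {0,1}" using that assms(7) unfolding C_def configs_def by (auto simp: PiE_iff)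
    thus ?thesis unfolding f_def by auto
  qed
  have q1: "q \<le> 1" unfolding q_def
  proof (rule power_le_one)
    show "0 \<le> min r (1/r)" using r0 by simp
    show "min r (1/r) \<le> 1"
    proof (cases "r \<le> 1")
      case False
      hence "1/r < 1" using r0 by (simp add: divide_less_eq)
      thus ?thesis by linarith
    qed linarith
  qed
  have E1: "spin_expect V E \<beta> \<gamma> L1 v = (\<Sum>s\<in>C. w1 s * f s) / sum w1 C"
    unfolding expect_eq w1_def C_def f_def ..
  have E2: "spin_expect V E \<beta> \<gamma> L2 v = (\<Sum>s\<in>C. w2 s * f s) / sum w2 C"
    unfolding expect_eq w2_def C_def f_def ..
  have c12: "q * w1 s * w2 t \<le> w2 s * w1 t" for s t
  proof -
    have "(w1 s * w1 t) * (q * h t) \<le> (w1 s * w1 t) * h s"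
      by (rule mult_left_mono[OF hc]) (use w1n in simp)
    thus ?thesis by (simp add: w2eq mult_ac)
  qed
  have c21: "q * w2 s * w1 t \<le> w1 s * w2 t" for s t
  proof -
    have "(w1 s * w1 t) * (q * h s) \<le> (w1 s * w1 t) * h t"
      by (rule mult_left_mono[OF hc]) (use w1n in simp)
    thus ?thesis by (simp add: w2eq mult_ac)
  qed
  have d1: "(\<Sum>s\<in>C. w1 s * f s) / sum w1 C - (\<Sum>s\<in>C. w2 s * f s) / sum w2 C \<le> 1 - q"
    by (rule abstract_bound[OF finC _ _ Z1 Z2 f01 q1 c12]) (use w1n w2n in auto)
  have d2: "(\<Sum>s\<in>C. w2 s * f s) / sum w2 C - (\<Sum>s\<in>C. w1 s * f s) / sum w1 C \<le> 1 - q"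
    by (rule abstract_bound[OF finC _ _ Z2 Z1 f01 q1 c21]) (use w1n w2n in auto)
  have "1 - q \<le> real n * \<bar>r - 1\<bar>" unfolding q_def by (rule bern_bound[OF r0])
  also have "\<dots> \<le> 2 * real n * \<bar>r - 1\<bar>" by simp
  finally have "1 - q \<le> 2 * real n * \<bar>r - 1\<bar>" .
  with d1 d2 E1 E2 show ?thesis unfolding L1_def L2_def r_def n_def by linarith
qed

end
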